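(* Let $k\ge 2$, $m\in\{1,\dots,k-1\}$ and $\alpha\in(0,1)$. Let $\theta_1\ge\theta_2\ge\dots\ge\theta_k$ be real parameters, and let $(\hat{\mathcal S}_T)_{T\ge 0}$ be the sequence of sets produced by the Sequential Correct Screening (SCS) procedure described in the context, built from confidence processes $L_{iT}(\cdot),U_{iT}(\cdot)$ satisfying the time-uniform guarantee ( * ) and $L_{iT}(\beta)\le U_{iT}(\beta)$. Then: (a) $\mathbb P\big(\forall T\in\mathbb N:\ \hat{\mathcal S}_T\subseteq \hat{\mathcal S}_{T-1}\big)=1$. (b) If $\theta_m>\theta_{m+1}$ (so that $\mathcal S=\{1,\dots,m\}$), then $\mathbb P\big(\forall T\in\mathbb N:\ \mathcal S\subseteq\hat{\mathcal S}_T\big)\ge 1-\alpha$. (c) If $\theta_m>\theta_{m+1}$ and, in addition, for every $i\in[k]$ and every $\beta\in(0,1)$ we have $U_{iT}(\beta)\to\theta_i$ and $L_{iT}(\beta)\to\theta_i$ in probability as $T\to\infty$, then $\mathbb P\big(\exists T_0\in\mathbb N\ \forall T\ge T_0:\ \hat{\mathcal S}_T=\mathcal S\big)\ge 1-\alpha$.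
   Context: Setting: $(\Omega,\mathcal F,\mathbb P)$ is a probability space with a filtration $(\mathcal F_T)_{T\in\mathbb N}$, $\mathbb N=\{1,2,\dots\}$, and $[k]=\{1,\dots,k\}$. The $m$-promising set is $\mathcal S=\{i\in[k]:\theta_i\ge\theta_m\}$. For each $i\in[k]$ and each $\beta\in(0,1)$, we are given two $(\mathcal F_T)$-adapted processes $(L_{iT}(\beta))_{T\in\mathbb N}$ and $(U_{iT}(\beta))_{T\in\mathbb N}$ with values in $[-\infty,\infty]$, such that $L_{iT}(\beta)\le U_{iT}(\beta)$ for all $T$, and satisfying the time-uniform guarantee ( * ) $\mathbb P(\exists T\in\mathbb N:\theta_i\le L_{iT}(\beta))\le\beta$ and $\mathbb P(\exists T\in\mathbb N:\theta_i\ge U_{iT}(\beta))\le\beta$. No assumption is made on the dependence between the processes for different $i$. SCS procedure: set $\alpha_{km}=\alpha/\{2m(k-m)\}$ and $\hat{\mathcal S}_0=[k]$. For $T\in\mathbb N$, let $L^{(m)}_T(\alpha_{km})$ be the $m$-th largest value (counting multiplicity) among $\{L_{iT}(\alpha_{km}):i\in\hat{\mathcal S}_{T-1}\}$, and set $\hat{\mathcal S}_T=\hat{\mathcal S}_{T-1}\setminus\{i\in\hat{\mathcal S}_{T-1}:U_{iT}(\alpha_{km})<L^{(m)}_T(\alpha_{km})\}$. (Under $L\le U$, this keeps $|\hat{\mathcal S}_T|\ge m$ for all $T$, so the $m$-th largest value is always defined.) *)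

theory Defs
  imports "HOL-Probability.Probability"
begin

definition mth_largest :: "nat \<Rightarrow> nat set \<Rightarrow> (nat \<Rightarrow> ereal) \<Rightarrow> ereal" where
  "mth_largest m A f = rev (sort (map f (sorted_list_of_set A))) ! (m - 1)"

definition alpha_km :: "real \<Rightarrow> nat \<Rightarrow> nat \<Rightarrow> real" where
  "alpha_km \<alpha> k m = \<alpha> / (2 * real m * (real k - real m))"

text \<open>SCS procedure.  L i beta T omega is the lower confidence process L_{iT}(beta) at omega,
  U likewise; time T ranges over 1,2,...; scs ... 0 is the initial set [k] = {1..k}.\<close>
fun scs :: "(nat \<Rightarrow> real \<Rightarrow> nat \<Rightarrow> 'a \<Rightarrow> ereal) \<Rightarrow> (nat \<Rightarrow> real \<Rightarrow> nat \<Rightarrow> 'a \<Rightarrow> ereal)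
            \<Rightarrow> real \<Rightarrow> nat \<Rightarrow> nat \<Rightarrow> 'a \<Rightarrow> nat \<Rightarrow> nat set" where
  "scs L U \<alpha> k m \<omega> 0 = {1..k}"
| "scs L U \<alpha> k m \<omega> (Suc T) =
     (let S = scs L U \<alpha> k m \<omega> T;
          a = alpha_km \<alpha> k m;
          l = mth_largest m S (\<lambda>i. L i a (Suc T) \<omega>)
      in S - {i \<in> S. U i a (Suc T) \<omega> < l})"

definition promising :: "(nat \<Rightarrow> real) \<Rightarrow> nat \<Rightarrow> nat \<Rightarrow> nat set" where
  "promising \<theta> k m = {i \<in> {1..k}. \<theta> i \<ge> \<theta> m}"

end

theory Submission
  imports Defs
begin


lemma card_filter_sort:
  fixes f :: "nat \<Rightarrow> ereal"
  assumes "finite A"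
  defines "s \<equiv> sort (map f (sorted_list_of_set A))"
  shows "card {j\<in>A. P (f j)} = card {p. p < card A \<and> P (s ! p)}" "length s = card A"
proof -
  let ?xs = "sorted_list_of_set A"
  have "card {j\<in>A. P (f j)} = length (filter (\<lambda>j. P (f j)) ?xs)"
    using assms(1) by (subst distinct_length_filter) (auto intro: arg_cong[where f=card])
  also have "\<dots> = length (filter P (map f ?xs))" by (simp add: filter_map o_def)
  also have "\<dots> = length (filter P s)" unfolding s_def
    by (metis mset_filter mset_sort size_mset)
  also have "\<dots> = card {p. p < length s \<and> P (s ! p)}" by (rule length_filter_conv_card)
  finally show "card {j\<in>A. P (f j)} = card {p. p < card A \<and> P (s ! p)}"
    using assms(1) unfolding s_def by simp
  show "length s = card A" using assms(1) unfolding s_def by simp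
qed

lemma mth_largest_alt:
  assumes "finite A" "1 \<le> m" "m \<le> card A"
  shows "mth_largest m A f = sort (map f (sorted_list_of_set A)) ! (card A - m)"
  using assms unfolding mth_largest_def by (simp add: rev_nth Suc_diff_le)

lemma mth_largest_less_iff:
  fixes f :: "nat \<Rightarrow> ereal"
  assumes A: "finite A" and m: "1 \<le> m" "m \<le> card A"
  shows "x < mth_largest m A f \<longleftrightarrow> m \<le> card {j\<in>A. x < f j}"
proof -
  define s where "s = sort (map f (sorted_list_of_set A))"
  define n where "n = card A"
  have c: "card {j\<in>A. x < f j} = card {p. p < n \<and> x < s ! p}" and ls: "length s = n"
    using card_filter_sort(1)[OF A, where f=f and P="\<lambda>v. x < v"] card_filter_sort(2)[OF A, where f=f] unfolding s_def n_def by auto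
  have so: "sorted s" unfolding s_def by simp
  have ml: "mth_largest m A f = s ! (n - m)" using mth_largest_alt[OF assms] s_def n_def by simp
  show ?thesis
  proof
    assume "x < mth_largest m A f"
    then have "{n-m..<n} \<subseteq> {p. p < n \<and> x < s ! p}"
      using so ls ml by (auto intro: less_le_trans[OF _ sorted_nth_mono[OF so]])
    then have "card {n-m..<n} \<le> card {p. p < n \<and> x < s ! p}" by (intro card_mono) auto
    then show "m \<le> card {j\<in>A. x < f j}" using c m n_def by simp
  next
    assume h: "m \<le> card {j\<in>A. x < f j}"
    show "x < mth_largest m A f"
    proof (rule ccontr)
      assume "\<not> x < mth_largest m A f"
      then have le: "s ! (n-m) \<le> x" using ml by simp
      have "{p. p < n \<and> x < s ! p} \<subseteq> {Suc (n-m)..<n}"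
      proof
        fix p assume "p \<in> {p. p < n \<and> x < s ! p}"
        then have p: "p < n" "x < s ! p" by auto
        have "Suc (n - m) \<le> p"
        proof (rule ccontr)
          assume "\<not> Suc (n - m) \<le> p"
          then have "s ! p \<le> s ! (n-m)" using so ls m n_def by (intro sorted_nth_mono) auto
          then show False using le p by simp
        qed
        then show "p \<in> {Suc (n-m)..<n}" using p by simp
      qed
      then have "card {p. p < n \<and> x < s ! p} \<le> card {Suc (n-m)..<n}" by (intro card_mono) auto
      then show False using h c m n_def by simp
    qed
  qed
qed

lemma mth_largest_le_card:
  fixes f :: "nat \<Rightarrow> ereal"
  assumes A: "finite A" and m: "1 \<le> m" "m \<le> card A"
  shows "m \<le> card {j\<in>A. mth_largest m A f \<le> f j}"
proof -
  define s where "s = sort (map f (sorted_list_of_set A))"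
  define n where "n = card A"
  let ?x = "mth_largest m A f"
  have c: "card {j\<in>A. ?x \<le> f j} = card {p. p < n \<and> ?x \<le> s ! p}" and ls: "length s = n"
    using card_filter_sort(1)[OF A, where f=f and P="\<lambda>v. ?x \<le> v"] card_filter_sort(2)[OF A, where f=f] unfolding s_def n_def by auto
  have so: "sorted s" unfolding s_def by simp
  have ml: "?x = s ! (n - m)" using mth_largest_alt[OF assms] s_def n_def by simp
  have "{n-m..<n} \<subseteq> {p. p < n \<and> ?x \<le> s ! p}"
    using so ls ml by (auto intro: sorted_nth_mono)
  then have "card {n-m..<n} \<le> card {p. p < n \<and> ?x \<le> s ! p}" by (intro card_mono) auto
  then show ?thesis using c m n_def by simp
qed


lemma pred_finite_set:
  fixes M :: "'a measure" and P :: "'b \<Rightarrow> 'a \<Rightarrow> bool" and Q :: "'b set \<Rightarrow> bool"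
  assumes I: "finite I" and P: "\<And>x. x \<in> I \<Longrightarrow> Measurable.pred M (P x)"
  shows "Measurable.pred M (\<lambda>\<omega>. Q {x\<in>I. P x \<omega>})"
proof -
  have "(\<lambda>\<omega>. {x\<in>I. P x \<omega>}) \<in> measurable M (count_space (Pow I))"
    unfolding measurable_count_space_eq2[OF finite_Pow_iff[THEN iffD2, OF I]]
  proof (intro conjI ballI)
    show "(\<lambda>\<omega>. {x\<in>I. P x \<omega>}) \<in> space M \<rightarrow> Pow I" by auto
  next
    fix a assume "a \<in> Pow I"
    have "(\<lambda>\<omega>. {x\<in>I. P x \<omega>}) -` {a} \<inter> space M = {\<omega>\<in>space M. \<forall>x\<in>I. (x \<in> a) = P x \<omega>}"
      using \<open>a \<in> Pow I\<close> by auto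
    also have "\<dots> \<in> sets M"
    proof (rule sets.sets_Collect_finite_All[OF _ I])
      fix i assume i: "i \<in> I"
      have pi: "{\<omega>\<in>space M. P i \<omega>} \<in> sets M" using P[OF i] by (simp add: pred_def)
      show "{\<omega>\<in>space M. (i \<in> a) = P i \<omega>} \<in> sets M"
      proof (cases "i \<in> a")
        case True then show ?thesis using pi by simp
      next
        case False then show ?thesis using sets.sets_Collect_neg[OF pi] by simp
      qed
    qed
    finally show "(\<lambda>\<omega>. {x\<in>I. P x \<omega>}) -` {a} \<inter> space M \<in> sets M" .
  qed
  then show ?thesis by (rule measurable_compose) simp
qed

lemma ereal_abs_close:
  assumes "\<not> ereal e < \<bar>x - ereal c\<bar>"
  shows "\<exists>r. x = ereal r \<and> \<bar>r - c\<bar> \<le> e"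
  using assms by (cases x) auto

lemma k_le: "1 \<le> m \<Longrightarrow> m + 1 \<le> k \<Longrightarrow> real k \<le> 2 * real m * (real k - real m)"
proof -
  assume a: "1 \<le> m" "m + 1 \<le> k"
  define d where "d = real k - real m"
  have d: "d \<ge> 1" using a d_def by simp
  have m: "real m \<ge> 1" using a by simp
  have "real m * d \<ge> real m" "real m * d \<ge> d" using d m
    by (simp_all add: mult_le_cancel_left1 mult_le_cancel_right1)
  then show ?thesis unfolding d_def by simp
qed

lemma ex_meas: fixes M :: "'a measure" and X :: "nat \<Rightarrow> 'a \<Rightarrow> bool"
  assumes that: "\<And>T. T \<ge> 1 \<Longrightarrow> Measurable.pred M (X T)"
  shows "{\<omega>\<in>space M. \<exists>T\<ge>1. X T \<omega>} \<in> sets M"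
  proof -
    have "{\<omega>\<in>space M. \<exists>T. 1 \<le> T \<and> X T \<omega>} \<in> sets M"
    proof (rule sets.sets_Collect_countable_Ex)
      fix T :: nat show "{\<omega>\<in>space M. 1 \<le> T \<and> X T \<omega>} \<in> sets M"
      proof (cases "1 \<le> T")
        case True
        have "{\<omega>\<in>space M. X T \<omega>} \<in> sets M" using that[OF True] unfolding pred_def .
        moreover have "{\<omega>\<in>space M. 1 \<le> T \<and> X T \<omega>} = {\<omega>\<in>space M. X T \<omega>}" using True by blast
        ultimately show ?thesis by (simp only:)
      next
        case False
        then have "{\<omega>\<in>space M. 1 \<le> T \<and> X T \<omega>} = {}" by blast
        then show ?thesis by (simp only: sets.empty_sets)
      qed
    qed
    then show ?thesis .
  qed




theorem theorem1:
  fixes M :: "'a measure" and F :: "nat \<Rightarrow> 'a measure"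
    and L U :: "nat \<Rightarrow> real \<Rightarrow> nat \<Rightarrow> 'a \<Rightarrow> ereal"
    and \<theta> :: "nat \<Rightarrow> real" and k m :: nat and \<alpha> :: real
  assumes P: "prob_space M"
    and filt_sub: "\<And>T. T \<ge> 1 \<Longrightarrow> subalgebra M (F T)"
    and filt_mono: "\<And>s T. 1 \<le> s \<Longrightarrow> s \<le> T \<Longrightarrow> sets (F s) \<subseteq> sets (F T)"
    and L_adapt: "\<And>i \<beta> T. i \<in> {1..k} \<Longrightarrow> 0 < \<beta> \<Longrightarrow> \<beta> < 1 \<Longrightarrow> T \<ge> 1 \<Longrightarrow>
                    L i \<beta> T \<in> borel_measurable (F T)"
    and U_adapt: "\<And>i \<beta> T. i \<in> {1..k} \<Longrightarrow> 0 < \<beta> \<Longrightarrow> \<beta> < 1 \<Longrightarrow> T \<ge> 1 \<Longrightarrow>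
                    U i \<beta> T \<in> borel_measurable (F T)"
    and LU: "\<And>i \<beta> T \<omega>. i \<in> {1..k} \<Longrightarrow> 0 < \<beta> \<Longrightarrow> \<beta> < 1 \<Longrightarrow> T \<ge> 1 \<Longrightarrow>
                    \<omega> \<in> space M \<Longrightarrow> L i \<beta> T \<omega> \<le> U i \<beta> T \<omega>"
    and L_cov: "\<And>i \<beta>. i \<in> {1..k} \<Longrightarrow> 0 < \<beta> \<Longrightarrow> \<beta> < 1 \<Longrightarrow>
                    measure M {\<omega> \<in> space M. \<exists>T\<ge>1. ereal (\<theta> i) \<le> L i \<beta> T \<omega>} \<le> \<beta>"
    and U_cov: "\<And>i \<beta>. i \<in> {1..k} \<Longrightarrow> 0 < \<beta> \<Longrightarrow> \<beta> < 1 \<Longrightarrow>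
                    measure M {\<omega> \<in> space M. \<exists>T\<ge>1. ereal (\<theta> i) \<ge> U i \<beta> T \<omega>} \<le> \<beta>"
    and k2: "k \<ge> 2" and m1: "1 \<le> m" and mk: "m \<le> k - 1"
    and \<alpha>0: "0 < \<alpha>" and \<alpha>1: "\<alpha> < 1"
    and \<theta>_sorted: "\<And>i j. 1 \<le> i \<Longrightarrow> i \<le> j \<Longrightarrow> j \<le> k \<Longrightarrow> \<theta> j \<le> \<theta> i"
  shows
    "measure M {\<omega> \<in> space M. \<forall>T\<ge>1. scs L U \<alpha> k m \<omega> T \<subseteq> scs L U \<alpha> k m \<omega> (T - 1)} = 1
     \<and> (\<theta> m > \<theta> (m + 1) \<longrightarrow>
          measure M {\<omega> \<in> space M. \<forall>T\<ge>1. promising \<theta> k m \<subseteq> scs L U \<alpha> k m \<omega> T} \<ge> 1 - \<alpha>)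
     \<and> ((\<theta> m > \<theta> (m + 1) \<and>
         (\<forall>i\<in>{1..k}. \<forall>\<beta>. 0 < \<beta> \<and> \<beta> < 1 \<longrightarrow> (\<forall>\<epsilon>>0.
            ((\<lambda>T. measure M {\<omega> \<in> space M. \<bar>U i \<beta> T \<omega> - ereal (\<theta> i)\<bar> > ereal \<epsilon>}) \<longlonglongrightarrow> 0) \<and>
            ((\<lambda>T. measure M {\<omega> \<in> space M. \<bar>L i \<beta> T \<omega> - ereal (\<theta> i)\<bar> > ereal \<epsilon>}) \<longlonglongrightarrow> 0))))
        \<longrightarrow> measure M {\<omega> \<in> space M. \<exists>T0\<ge>1. \<forall>T\<ge>T0. scs L U \<alpha> k m \<omega> T = promising \<theta> k m}
              \<ge> 1 - \<alpha>)"
proof -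
  interpret P: prob_space M by (rule P)
  define a where "a = alpha_km \<alpha> k m"
  define sc where "sc = scs L U \<alpha> k m"
  have mk1: "m + 1 \<le> k" using mk k2 by simp
  have a0: "0 < a" unfolding a_def alpha_km_def using \<alpha>0 m1 mk1 by (simp add: field_simps)
  have ka: "real k * a \<le> \<alpha>"
  proof -
    have pos: "0 < 2 * real m * (real k - real m)" using m1 mk1 by simp
    have "real k * a = \<alpha> * (real k / (2 * real m * (real k - real m)))"
      unfolding a_def alpha_km_def by simp
    also have "\<dots> \<le> \<alpha> * 1"
      using k_le[OF m1 mk1] pos \<alpha>0 by (intro mult_left_mono) (auto simp: divide_le_eq)
    finally show ?thesis by simp
  qed
  have a1: "a < 1"
  proof -
    have "real k \<ge> 1" using k2 by simp
    then have "a \<le> real k * a" using a0 by simp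
    then show ?thesis using ka \<alpha>1 by simp
  qed
  have Lm: "L i a T \<in> borel_measurable M" if "i \<in> {1..k}" "T \<ge> 1" for i T
    using measurable_from_subalg[OF filt_sub[OF that(2)] L_adapt[OF that(1) a0 a1 that(2)]] .
  have Um: "U i a T \<in> borel_measurable M" if "i \<in> {1..k}" "T \<ge> 1" for i T
    using measurable_from_subalg[OF filt_sub[OF that(2)] U_adapt[OF that(1) a0 a1 that(2)]] .
  have sc_Suc: "sc \<omega> (Suc T) = sc \<omega> T - {i \<in> sc \<omega> T. U i a (Suc T) \<omega> < mth_largest m (sc \<omega> T) (\<lambda>i. L i a (Suc T) \<omega>)}"
    for \<omega> T unfolding sc_def a_def by (simp add: Let_def)
  have sc_sub: "sc \<omega> T \<subseteq> {1..k}" for \<omega> T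
    by (induction T) (auto simp: sc_Suc, auto simp: sc_def)
  have sc_fin: "finite (sc \<omega> T)" for \<omega> T using sc_sub finite_subset by blast
  have sc_mono: "sc \<omega> T' \<subseteq> sc \<omega> T" if "T \<le> T'" for \<omega> T T'
    using lift_Suc_antimono_le[of "sc \<omega>", OF _ that] sc_Suc by blast
  have sc_card: "m \<le> card (sc \<omega> T)" if \<omega>: "\<omega> \<in> space M" for \<omega> T
  proof (induction T)
    case 0 then show ?case using mk by (simp add: sc_def)
  next
    case (Suc T)
    let ?l = "mth_largest m (sc \<omega> T) (\<lambda>i. L i a (Suc T) \<omega>)"
    have "{j \<in> sc \<omega> T. ?l \<le> L j a (Suc T) \<omega>} \<subseteq> sc \<omega> (Suc T)"
    proof
      fix j assume j: "j \<in> {j \<in> sc \<omega> T. ?l \<le> L j a (Suc T) \<omega>}"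
      then have "j \<in> {1..k}" using sc_sub by blast
      then have "L j a (Suc T) \<omega> \<le> U j a (Suc T) \<omega>" using LU a0 a1 \<omega> by simp
      then show "j \<in> sc \<omega> (Suc T)" using j unfolding sc_Suc by auto
    qed
    moreover have "m \<le> card {j \<in> sc \<omega> T. ?l \<le> L j a (Suc T) \<omega>}"
      by (rule mth_largest_le_card[OF sc_fin m1 Suc])
    ultimately show ?case using card_mono[OF sc_fin] le_trans by blast
  qed
  have sc_Suc_iff: "i \<in> sc \<omega> (Suc T) \<longleftrightarrow> i \<in> sc \<omega> T \<and> \<not> m \<le> card {j\<in>sc \<omega> T. U i a (Suc T) \<omega> < L j a (Suc T) \<omega>}"
    if "\<omega> \<in> space M" for \<omega> i T
    unfolding sc_Suc using mth_largest_less_iff[OF sc_fin m1 sc_card[OF that]] by auto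
  have pred_mem: "Measurable.pred M (\<lambda>\<omega>. i \<in> sc \<omega> T)" if "i \<in> {1..k}" for i T
    using that
  proof (induction T arbitrary: i)
    case 0 then show ?case by (simp add: sc_def)
  next
    case (Suc T)
    have A: "Measurable.pred M (\<lambda>\<omega>. i \<in> sc \<omega> T)" using Suc by blast
    have B: "Measurable.pred M (\<lambda>\<omega>. (\<lambda>r. m \<le> card r) {j\<in>{1..k}. j \<in> sc \<omega> T \<and> U i a (Suc T) \<omega> < L j a (Suc T) \<omega>})"
    proof (rule pred_finite_set)
      fix j assume j: "j \<in> {1..k}"
      have [measurable]: "U i a (Suc T) \<in> borel_measurable M" using Um Suc.prems by simp
      have [measurable]: "L j a (Suc T) \<in> borel_measurable M" using Lm j by simp
      have [measurable]: "Measurable.pred M (\<lambda>\<omega>. j \<in> sc \<omega> T)" using Suc.IH j by blast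
      show "Measurable.pred M (\<lambda>\<omega>. j \<in> sc \<omega> T \<and> U i a (Suc T) \<omega> < L j a (Suc T) \<omega>)"
        by measurable
    qed simp
    have "Measurable.pred M (\<lambda>\<omega>. i \<in> sc \<omega> T \<and> \<not> m \<le> card {j\<in>{1..k}. j \<in> sc \<omega> T \<and> U i a (Suc T) \<omega> < L j a (Suc T) \<omega>})"
      using A B unfolding pred_def
      by (simp only: Collect_conj_eq[symmetric] sets.sets_Collect_conj sets.sets_Collect_neg)
    moreover have "{j\<in>sc \<omega> T. P j} = {j\<in>{1..k}. j \<in> sc \<omega> T \<and> P j}" for \<omega> and P :: "nat \<Rightarrow> bool"
      using sc_sub by blast
    ultimately show ?case
      by (subst measurable_cong[OF sc_Suc_iff]) auto
  qed
  have pred_sc: "Measurable.pred M (\<lambda>\<omega>. Q (sc \<omega> T))" for Q T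
  proof -
    have "Measurable.pred M (\<lambda>\<omega>. Q {i\<in>{1..k}. i \<in> sc \<omega> T})"
      by (rule pred_finite_set) (auto intro: pred_mem)
    moreover have "{i\<in>{1..k}. i \<in> sc \<omega> T} = sc \<omega> T" for \<omega> using sc_sub by blast
    ultimately show ?thesis by simp
  qed
  have prom: "\<theta> m > \<theta> (m + 1) \<Longrightarrow> promising \<theta> k m = {1..m}"
  proof -
    assume gap: "\<theta> m > \<theta> (m + 1)"
    show ?thesis unfolding promising_def
    proof safe
      fix i assume i: "i \<in> {1..k}" "\<theta> m \<le> \<theta> i"
      show "i \<in> {1..m}"
      proof (rule ccontr)
        assume "i \<notin> {1..m}"
        then have "\<theta> i \<le> \<theta> (m+1)" using i by (intro \<theta>_sorted) auto
        then show False using gap i by simp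
      qed
    next
      fix i assume "i \<in> {1..m}" then show "\<theta> m \<le> \<theta> i" using mk1 by (intro \<theta>_sorted) auto
    qed (use mk1 in auto)
  qed
  have partA: "measure M {\<omega> \<in> space M. \<forall>T\<ge>1. sc \<omega> T \<subseteq> sc \<omega> (T - 1)} = 1"
  proof -
    have "{\<omega> \<in> space M. \<forall>T\<ge>1. sc \<omega> T \<subseteq> sc \<omega> (T - 1)} = space M"
      using sc_mono by auto
    then show ?thesis using P.prob_space by simp
  qed
  have partBC: "measure M {\<omega> \<in> space M. \<forall>T\<ge>1. {1..m} \<subseteq> sc \<omega> T} \<ge> 1 - \<alpha> \<and>
     ((\<forall>i\<in>{1..k}. \<forall>\<beta>. 0 < \<beta> \<and> \<beta> < 1 \<longrightarrow> (\<forall>\<epsilon>>0.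
            ((\<lambda>T. measure M {\<omega> \<in> space M. \<bar>U i \<beta> T \<omega> - ereal (\<theta> i)\<bar> > ereal \<epsilon>}) \<longlonglongrightarrow> 0) \<and>
            ((\<lambda>T. measure M {\<omega> \<in> space M. \<bar>L i \<beta> T \<omega> - ereal (\<theta> i)\<bar> > ereal \<epsilon>}) \<longlonglongrightarrow> 0)))
      \<longrightarrow> measure M {\<omega> \<in> space M. \<exists>T0\<ge>1. \<forall>T\<ge>T0. sc \<omega> T = {1..m}} \<ge> 1 - \<alpha>)"
    if gap: "\<theta> m > \<theta> (m + 1)"
  proof -
    define Bad where "Bad i = (if i \<le> m then {\<omega>\<in>space M. \<exists>T\<ge>1. ereal (\<theta> i) \<ge> U i a T \<omega>}
                                   else {\<omega>\<in>space M. \<exists>T\<ge>1. ereal (\<theta> i) \<le> L i a T \<omega>})" for i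
    have Bad_meas: "Bad i \<in> sets M" if i: "i \<in> {1..k}" for i
    proof (cases "i \<le> m")
      case True
      have "{\<omega>\<in>space M. \<exists>T\<ge>1. ereal (\<theta> i) \<ge> U i a T \<omega>} \<in> sets M"
      proof (rule ex_meas)
        fix T :: nat assume "T \<ge> 1"
        then have [measurable]: "U i a T \<in> borel_measurable M" using Um i by simp
        show "Measurable.pred M (\<lambda>\<omega>. ereal (\<theta> i) \<ge> U i a T \<omega>)" by measurable
      qed
      moreover have "Bad i = {\<omega>\<in>space M. \<exists>T\<ge>1. ereal (\<theta> i) \<ge> U i a T \<omega>}" by (simp add: Bad_def True)
      ultimately show ?thesis by (simp only:)
    next
      case False
      have "{\<omega>\<in>space M. \<exists>T\<ge>1. ereal (\<theta> i) \<le> L i a T \<omega>} \<in> sets M"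
      proof (rule ex_meas)
        fix T :: nat assume "T \<ge> 1"
        then have [measurable]: "L i a T \<in> borel_measurable M" using Lm i by simp
        show "Measurable.pred M (\<lambda>\<omega>. ereal (\<theta> i) \<le> L i a T \<omega>)" by measurable
      qed
      moreover have "Bad i = {\<omega>\<in>space M. \<exists>T\<ge>1. ereal (\<theta> i) \<le> L i a T \<omega>}" by (simp add: Bad_def False)
      ultimately show ?thesis by (simp only:)
    qed
    have Bad_le: "measure M (Bad i) \<le> a" if i: "i \<in> {1..k}" for i
    proof (cases "i \<le> m")
      case True
      then have "Bad i = {\<omega>\<in>space M. \<exists>T\<ge>1. ereal (\<theta> i) \<ge> U i a T \<omega>}" by (simp add: Bad_def)
      then show ?thesis using U_cov[OF i a0 a1] by simp
    next
      case False
      then have "Bad i = {\<omega>\<in>space M. \<exists>T\<ge>1. ereal (\<theta> i) \<le> L i a T \<omega>}" by (simp add: Bad_def)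
      then show ?thesis using L_cov[OF i a0 a1] by simp
    qed
    define G where "G = space M - (\<Union>i\<in>{1..k}. Bad i)"
    have UB_meas: "(\<Union>i\<in>{1..k}. Bad i) \<in> sets M" by (rule sets.finite_UN) (simp, rule Bad_meas)
    have G_meas: "G \<in> sets M" unfolding G_def by (rule sets.compl_sets[OF UB_meas])
    have G_prob: "measure M G \<ge> 1 - \<alpha>"
    proof -
      have "measure M (\<Union>i\<in>{1..k}. Bad i) \<le> (\<Sum>i\<in>{1..k}. measure M (Bad i))"
        using Bad_meas by (intro P.finite_measure_subadditive_finite) auto
      also have "\<dots> \<le> of_nat (card {1..k}) * a" by (rule sum_bounded_above) (rule Bad_le)
      also have "\<dots> \<le> \<alpha>" using ka by simp
      finally have "measure M (\<Union>i\<in>{1..k}. Bad i) \<le> \<alpha>" .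
      moreover have "measure M G = 1 - measure M (\<Union>i\<in>{1..k}. Bad i)"
        unfolding G_def using P.prob_compl[OF UB_meas] by simp
      ultimately show ?thesis by simp
    qed
    have G_U: "ereal (\<theta> i) < U i a T \<omega>" if "\<omega> \<in> G" "i \<in> {1..m}" "T \<ge> 1" for \<omega> i T
    proof -
      have "i \<in> {1..k}" using that mk1 by auto
      then have nb: "\<omega> \<notin> Bad i" and sp: "\<omega> \<in> space M" using that(1) unfolding G_def by blast+
      have "Bad i = {\<omega>\<in>space M. \<exists>T\<ge>1. ereal (\<theta> i) \<ge> U i a T \<omega>}" using that(2) by (simp add: Bad_def)
      then have "\<not> ereal (\<theta> i) \<ge> U i a T \<omega>" using nb sp that(3) by blast
      then show ?thesis by (simp add: not_le)
    qed
    have G_L: "L j a T \<omega> < ereal (\<theta> j)" if "\<omega> \<in> G" "j \<in> {m+1..k}" "T \<ge> 1" for \<omega> j T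
    proof -
      have "j \<in> {1..k}" using that mk1 by auto
      then have nb: "\<omega> \<notin> Bad j" and sp: "\<omega> \<in> space M" using that(1) unfolding G_def by blast+
      have "Bad j = {\<omega>\<in>space M. \<exists>T\<ge>1. ereal (\<theta> j) \<le> L j a T \<omega>}" using that(2) by (simp add: Bad_def)
      then have "\<not> ereal (\<theta> j) \<le> L j a T \<omega>" using nb sp that(3) by blast
      then show ?thesis by (simp add: not_le)
    qed
    have th_lo: "\<theta> i \<ge> \<theta> m" if "i \<in> {1..m}" for i using that mk1 by (intro \<theta>_sorted) auto
    have th_hi: "\<theta> j \<le> \<theta> (m+1)" if "j \<in> {m+1..k}" for j using that by (intro \<theta>_sorted) auto
    have keyB: "{1..m} \<subseteq> sc \<omega> T" if \<omega>G: "\<omega> \<in> G" for \<omega> T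
    proof (induction T)
      case 0 then show ?case using mk1 by (auto simp: sc_def)
    next
      case (Suc T)
      have \<omega>: "\<omega> \<in> space M" using \<omega>G unfolding G_def by blast
      show ?case
      proof
        fix i assume i: "i \<in> {1..m}"
        have isc: "i \<in> sc \<omega> T" using Suc i by blast
        show "i \<in> sc \<omega> (Suc T)"
        proof (rule ccontr)
          assume "i \<notin> sc \<omega> (Suc T)"
          then have c: "m \<le> card {j\<in>sc \<omega> T. U i a (Suc T) \<omega> < L j a (Suc T) \<omega>}" (is "m \<le> card ?J")
            using sc_Suc_iff[OF \<omega>] isc by blast
          have "\<not> ?J \<subseteq> {1..m} - {i}"
          proof
            assume "?J \<subseteq> {1..m} - {i}"
            then have "card ?J \<le> card ({1..m} - {i})" by (intro card_mono) auto
            then have "card ?J \<le> m - 1" using i by simp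
            then show False using c m1 by linarith
          qed
          then obtain j where j: "j \<in> sc \<omega> T" "U i a (Suc T) \<omega> < L j a (Suc T) \<omega>" "j \<notin> {1..m} - {i}"
            by blast
          have ik: "i \<in> {1..k}" using i mk1 by auto
          have "L i a (Suc T) \<omega> \<le> U i a (Suc T) \<omega>" using LU[OF ik a0 a1 _ \<omega>] by simp
          then have "j \<noteq> i" using j by auto
          moreover have "j \<in> {1..k}" using j(1) sc_sub by blast
          ultimately have jm: "j \<in> {m+1..k}" using j(3) by auto
          have c1: "L j a (Suc T) \<omega> < ereal (\<theta> j)" using G_L[OF \<omega>G jm] by simp
          have c2: "ereal (\<theta> j) < ereal (\<theta> i)" using th_lo[OF i] th_hi[OF jm] gap by simp
          have c3: "ereal (\<theta> i) < U i a (Suc T) \<omega>" using G_U[OF \<omega>G i] by simp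
          have "L j a (Suc T) \<omega> < L j a (Suc T) \<omega>"
            using less_trans[OF less_trans[OF less_trans[OF c1 c2] c3] j(2)] .
          then show False by simp
        qed
      qed
    qed
    have partB: "measure M {\<omega> \<in> space M. \<forall>T\<ge>1. {1..m} \<subseteq> sc \<omega> T} \<ge> 1 - \<alpha>"
    proof -
      have Bm: "{\<omega> \<in> space M. \<forall>T\<ge>1. {1..m} \<subseteq> sc \<omega> T} \<in> sets M"
      proof (rule sets.sets_Collect_countable_All)
        fix T :: nat
        show "{\<omega>\<in>space M. 1 \<le> T \<longrightarrow> {1..m} \<subseteq> sc \<omega> T} \<in> sets M"
          using pred_sc[of "\<lambda>S. 1 \<le> T \<longrightarrow> {1..m} \<subseteq> S" T] unfolding pred_def .
      qed
      have "G \<subseteq> {\<omega> \<in> space M. \<forall>T\<ge>1. {1..m} \<subseteq> sc \<omega> T}" using keyB unfolding G_def by blast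
      then have "measure M G \<le> measure M {\<omega> \<in> space M. \<forall>T\<ge>1. {1..m} \<subseteq> sc \<omega> T}"
        using Bm by (intro P.finite_measure_mono)
      then show ?thesis using G_prob by simp
    qed
    have partC: "measure M {\<omega> \<in> space M. \<exists>T0\<ge>1. \<forall>T\<ge>T0. sc \<omega> T = {1..m}} \<ge> 1 - \<alpha>"
      if conv: "\<forall>i\<in>{1..k}. \<forall>\<beta>. 0 < \<beta> \<and> \<beta> < 1 \<longrightarrow> (\<forall>\<epsilon>>0.
            ((\<lambda>T. measure M {\<omega> \<in> space M. \<bar>U i \<beta> T \<omega> - ereal (\<theta> i)\<bar> > ereal \<epsilon>}) \<longlonglongrightarrow> 0) \<and>
            ((\<lambda>T. measure M {\<omega> \<in> space M. \<bar>L i \<beta> T \<omega> - ereal (\<theta> i)\<bar> > ereal \<epsilon>}) \<longlonglongrightarrow> 0))"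
    proof -
      define \<epsilon> where "\<epsilon> = (\<theta> m - \<theta> (m+1)) / 3"
      have \<epsilon>0: "\<epsilon> > 0" using gap \<epsilon>_def by simp
      define N where "N j = {\<omega>\<in>space M. \<forall>T. j \<in> sc \<omega> T}" for j
      have N_meas: "N j \<in> sets M" for j
        unfolding N_def
      proof (rule sets.sets_Collect_countable_All)
        fix T :: nat show "{\<omega>\<in>space M. j \<in> sc \<omega> T} \<in> sets M"
          using pred_sc[of "\<lambda>S. j \<in> S" T] unfolding pred_def .
      qed
      define Us where "Us j T = {\<omega>\<in>space M. \<bar>U j a (Suc T) \<omega> - ereal (\<theta> j)\<bar> > ereal \<epsilon>}" for j T
      define Ls where "Ls i T = {\<omega>\<in>space M. \<bar>L i a (Suc T) \<omega> - ereal (\<theta> i)\<bar> > ereal \<epsilon>}" for i T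
      have Us_meas: "Us j T \<in> sets M" if "j \<in> {1..k}" for j T
      proof -
        have [measurable]: "U j a (Suc T) \<in> borel_measurable M" using Um that by simp
        show ?thesis unfolding Us_def by measurable
      qed
      have Ls_meas: "Ls i T \<in> sets M" if "i \<in> {1..k}" for i T
      proof -
        have [measurable]: "L i a (Suc T) \<in> borel_measurable M" using Lm that by simp
        show ?thesis unfolding Ls_def by measurable
      qed
      have null: "measure M (G \<inter> N j) = 0" if j: "j \<in> {m+1..k}" for j
      proof -
        have jk: "j \<in> {1..k}" using j by auto
        define f where "f T = measure M (Us j T) + (\<Sum>i\<in>{1..m}. measure M (Ls i T))" for T
        have "f \<longlonglongrightarrow> 0 + (\<Sum>i\<in>{1..m}. 0)"
          unfolding f_def
        proof (intro tendsto_add tendsto_sum)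
          have "(\<lambda>T. measure M {\<omega>\<in>space M. \<bar>U j a T \<omega> - ereal (\<theta> j)\<bar> > ereal \<epsilon>}) \<longlonglongrightarrow> 0"
            using conv jk a0 a1 \<epsilon>0 by blast
          then show "(\<lambda>T. measure M (Us j T)) \<longlonglongrightarrow> 0"
            unfolding Us_def by (rule LIMSEQ_Suc)
          fix i assume i: "i \<in> {1..m}"
          then have ik: "i \<in> {1..k}" using mk1 by auto
          have "(\<lambda>T. measure M {\<omega>\<in>space M. \<bar>L i a T \<omega> - ereal (\<theta> i)\<bar> > ereal \<epsilon>}) \<longlonglongrightarrow> 0"
            using conv ik a0 a1 \<epsilon>0 by blast
          then show "(\<lambda>T. measure M (Ls i T)) \<longlonglongrightarrow> 0"
            unfolding Ls_def by (rule LIMSEQ_Suc)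
        qed
        then have lim: "f \<longlonglongrightarrow> 0" by simp
        have bound: "measure M (G \<inter> N j) \<le> f T" for T
        proof -
          have sub: "G \<inter> N j \<subseteq> Us j T \<union> (\<Union>i\<in>{1..m}. Ls i T)"
          proof
            fix \<omega> assume \<omega>: "\<omega> \<in> G \<inter> N j"
            then have \<omega>G: "\<omega> \<in> G" and sp: "\<omega> \<in> space M" and allj: "\<forall>T. j \<in> sc \<omega> T"
              unfolding N_def by auto
            show "\<omega> \<in> Us j T \<union> (\<Union>i\<in>{1..m}. Ls i T)"
            proof (rule ccontr)
              assume nn: "\<omega> \<notin> Us j T \<union> (\<Union>i\<in>{1..m}. Ls i T)"
              then have nU: "\<not> ereal \<epsilon> < \<bar>U j a (Suc T) \<omega> - ereal (\<theta> j)\<bar>"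
                unfolding Us_def using sp by blast
              have nL: "\<not> ereal \<epsilon> < \<bar>L i a (Suc T) \<omega> - ereal (\<theta> i)\<bar>" if i: "i \<in> {1..m}" for i
                using nn i sp unfolding Ls_def by blast
              obtain r where r: "U j a (Suc T) \<omega> = ereal r" "\<bar>r - \<theta> j\<bar> \<le> \<epsilon>"
                using ereal_abs_close[OF nU] by blast
              have subJ: "{1..m} \<subseteq> {i\<in>sc \<omega> T. U j a (Suc T) \<omega> < L i a (Suc T) \<omega>}"
              proof
                fix i assume i: "i \<in> {1..m}"
                obtain s where s: "L i a (Suc T) \<omega> = ereal s" "\<bar>s - \<theta> i\<bar> \<le> \<epsilon>"
                  using ereal_abs_close[OF nL[OF i]] by blast
                have r1: "r \<le> \<theta> j + \<epsilon>" using r(2) by (simp add: abs_le_iff)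
                have s1: "\<theta> i - \<epsilon> \<le> s" using s(2) by (simp add: abs_le_iff)
                have e3: "3 * \<epsilon> = \<theta> m - \<theta> (m + 1)" using \<epsilon>_def by simp
                have "r < s" using r1 s1 e3 th_lo[OF i] th_hi[OF j] gap by linarith
                then show "i \<in> {i\<in>sc \<omega> T. U j a (Suc T) \<omega> < L i a (Suc T) \<omega>}"
                  using keyB[OF \<omega>G, of T] i r(1) s(1) by auto
              qed
              have "finite {i\<in>sc \<omega> T. U j a (Suc T) \<omega> < L i a (Suc T) \<omega>}" using sc_fin by simp
              then have "card {1..m} \<le> card {i\<in>sc \<omega> T. U j a (Suc T) \<omega> < L i a (Suc T) \<omega>}"
                using subJ by (rule card_mono)
              then have "m \<le> card {i\<in>sc \<omega> T. U j a (Suc T) \<omega> < L i a (Suc T) \<omega>}" by simp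
              then show False using sc_Suc_iff[OF sp, of j T] allj by blast
            qed
          qed
          have UL_meas: "(\<Union>i\<in>{1..m}. Ls i T) \<in> sets M"
            by (rule sets.finite_UN) (simp, rule Ls_meas, use mk1 in auto)
          have "measure M (G \<inter> N j) \<le> measure M (Us j T \<union> (\<Union>i\<in>{1..m}. Ls i T))"
            by (rule P.finite_measure_mono[OF sub sets.Un[OF Us_meas[OF jk] UL_meas]])
          also have "\<dots> \<le> measure M (Us j T) + measure M (\<Union>i\<in>{1..m}. Ls i T)"
            by (rule measure_subadditive[OF Us_meas[OF jk] UL_meas]) (simp_all add: P.emeasure_eq_measure)
          also have "measure M (\<Union>i\<in>{1..m}. Ls i T) \<le> (\<Sum>i\<in>{1..m}. measure M (Ls i T))"
            by (rule P.finite_measure_subadditive_finite) (simp, use Ls_meas mk1 in auto)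
          finally show ?thesis unfolding f_def by simp
        qed
        have "measure M (G \<inter> N j) \<le> 0" by (rule LIMSEQ_le_const[OF lim]) (use bound in auto)
        then show ?thesis using measure_nonneg[of M "G \<inter> N j"] by linarith
      qed
      define X where "X = (\<Union>j\<in>{m+1..k}. G \<inter> N j)"
      have X_meas: "X \<in> sets M" unfolding X_def
        by (rule sets.finite_UN) (simp, rule sets.Int[OF G_meas N_meas])
      have X_sub: "X \<subseteq> G" unfolding X_def by blast
      have "measure M X \<le> (\<Sum>j\<in>{m+1..k}. measure M (G \<inter> N j))" unfolding X_def
        by (rule P.finite_measure_subadditive_finite) (simp, use G_meas N_meas in auto)
      also have "\<dots> = 0" using null by simp
      finally have X0: "measure M X \<le> 0" .
      have GX: "measure M (G - X) = measure M G - measure M X"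
        by (rule P.finite_measure_Diff[OF G_meas X_meas X_sub])
      define C where "C = {\<omega> \<in> space M. \<exists>T0\<ge>1. \<forall>T\<ge>T0. sc \<omega> T = {1..m}}"
      have C_meas: "C \<in> sets M" unfolding C_def
      proof (rule ex_meas)
        fix T0 :: nat
        have "{\<omega>\<in>space M. \<forall>T. T0 \<le> T \<longrightarrow> sc \<omega> T = {1..m}} \<in> sets M"
        proof (rule sets.sets_Collect_countable_All)
          fix T :: nat show "{\<omega>\<in>space M. T0 \<le> T \<longrightarrow> sc \<omega> T = {1..m}} \<in> sets M"
            using pred_sc[of "\<lambda>S. T0 \<le> T \<longrightarrow> S = {1..m}" T] unfolding pred_def .
        qed
        then show "Measurable.pred M (\<lambda>\<omega>. \<forall>T\<ge>T0. sc \<omega> T = {1..m})" unfolding pred_def .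
      qed
      have GXC: "G - X \<subseteq> C"
      proof
        fix \<omega> assume \<omega>: "\<omega> \<in> G - X"
        then have \<omega>G: "\<omega> \<in> G" and sp: "\<omega> \<in> space M" unfolding G_def by auto
        have notN: "\<omega> \<notin> N j" if "j \<in> {m+1..k}" for j using \<omega> that unfolding X_def by blast
        have ev: "\<forall>j\<in>{m+1..k}. eventually (\<lambda>T. j \<notin> sc \<omega> T) sequentially"
        proof
          fix j assume j: "j \<in> {m+1..k}"
          then obtain T1 where T1: "j \<notin> sc \<omega> T1" using notN[OF j] sp unfolding N_def by blast
          show "eventually (\<lambda>T. j \<notin> sc \<omega> T) sequentially"
            unfolding eventually_sequentially using T1 sc_mono by blast
        qed
        have "eventually (\<lambda>T. \<forall>j\<in>{m+1..k}. j \<notin> sc \<omega> T) sequentially"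
          by (rule eventually_ball_finite[OF _ ev]) simp
        then obtain N0 where N0: "\<And>T. T \<ge> N0 \<Longrightarrow> \<forall>j\<in>{m+1..k}. j \<notin> sc \<omega> T"
          unfolding eventually_sequentially by blast
        have "sc \<omega> T = {1..m}" if T: "T \<ge> Suc N0" for T
        proof
          show "sc \<omega> T \<subseteq> {1..m}"
          proof
            fix x assume x: "x \<in> sc \<omega> T"
            then have "x \<in> {1..k}" using sc_sub by blast
            moreover have "x \<notin> {m+1..k}" using N0[of T] T x by auto
            ultimately show "x \<in> {1..m}" by auto
          qed
          show "{1..m} \<subseteq> sc \<omega> T" using keyB[OF \<omega>G] .
        qed
        then show "\<omega> \<in> C" unfolding C_def using sp by (intro CollectI conjI exI[of _ "Suc N0"]) auto
      qed
      have "measure M (G - X) \<le> measure M C" by (rule P.finite_measure_mono[OF GXC C_meas])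
      then show ?thesis using GX X0 G_prob unfolding C_def by linarith
    qed
    show ?thesis using partB partC by blast
  qed
  show ?thesis
  proof (intro conjI impI)
    show "measure M {\<omega> \<in> space M. \<forall>T\<ge>1. scs L U \<alpha> k m \<omega> T \<subseteq> scs L U \<alpha> k m \<omega> (T - 1)} = 1"
      using partA unfolding sc_def .
  next
    assume gap: "\<theta> m > \<theta> (m + 1)"
    show "measure M {\<omega> \<in> space M. \<forall>T\<ge>1. promising \<theta> k m \<subseteq> scs L U \<alpha> k m \<omega> T} \<ge> 1 - \<alpha>"
      using partBC[OF gap] prom[OF gap] unfolding sc_def by simp
  next
    assume h: "\<theta> m > \<theta> (m + 1) \<and>
         (\<forall>i\<in>{1..k}. \<forall>\<beta>. 0 < \<beta> \<and> \<beta> < 1 \<longrightarrow> (\<forall>\<epsilon>>0.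
            ((\<lambda>T. measure M {\<omega> \<in> space M. \<bar>U i \<beta> T \<omega> - ereal (\<theta> i)\<bar> > ereal \<epsilon>}) \<longlonglongrightarrow> 0) \<and>
            ((\<lambda>T. measure M {\<omega> \<in> space M. \<bar>L i \<beta> T \<omega> - ereal (\<theta> i)\<bar> > ereal \<epsilon>}) \<longlonglongrightarrow> 0)))"
    then show "measure M {\<omega> \<in> space M. \<exists>T0\<ge>1. \<forall>T\<ge>T0. scs L U \<alpha> k m \<omega> T = promising \<theta> k m} \<ge> 1 - \<alpha>"
      using partBC prom unfolding sc_def by simp
  qed
qed


end
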